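(* If $n\ge 3$ is odd, the free group $F_n$ has no $\Delta$-primitive elements.
   Context: $F_n$ is free with basis $x_1,\dots,x_n$; $\mathbb{Z}F_n$ is its integral group ring with augmentation ideal $\Delta$ (kernel of $\varepsilon:\mathbb{Z}F_n\to\mathbb{Z}$). For $g\in F_n$, the Fox derivatives $d_i(g)\in\mathbb{Z}F_n$ are the unique elements with $g-1=\sum_{i=1}^n d_i(g)(x_i-1)$. An element $u\in F_n$ is $\Delta$-primitive if $d_1(u),\dots,d_n(u)$ generate $\Delta$ as a right ideal of $\mathbb{Z}F_n$. *)

theory Defs
  imports Main
begin

text \<open>Free group F_n on generators x_0,...,x_(n-1) (the paper's x_1..x_n).
  A letter is (i, False) = x_i or (i, True) = x_i^-1.  Elements of F_n are
  freely reduced words over letters with index < n.\<close>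

type_synonym letter = "nat \<times> bool"
type_synonym word = "letter list"

fun fred :: "word \<Rightarrow> word" where
  "fred [] = []"
| "fred (x # xs) = (case fred xs of
      [] \<Rightarrow> [x]
    | y # ys \<Rightarrow> (if fst x = fst y \<and> snd x \<noteq> snd y then ys else x # y # ys))"

definition FG :: "nat \<Rightarrow> word set" where
  "FG n = {w. fred w = w \<and> (\<forall>l \<in> set w. fst l < n)}"

definition gmul :: "word \<Rightarrow> word \<Rightarrow> word" where
  "gmul u v = fred (u @ v)"

definition supp :: "(word \<Rightarrow> int) \<Rightarrow> word set" where
  "supp f = {g. f g \<noteq> 0}"

definition ZF :: "nat \<Rightarrow> (word \<Rightarrow> int) set" where
  "ZF n = {f. finite (supp f) \<and> supp f \<subseteq> FG n}"

definition radd :: "(word \<Rightarrow> int) \<Rightarrow> (word \<Rightarrow> int) \<Rightarrow> (word \<Rightarrow> int)" where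
  "radd f h = (\<lambda>g. f g + h g)"

definition rsub :: "(word \<Rightarrow> int) \<Rightarrow> (word \<Rightarrow> int) \<Rightarrow> (word \<Rightarrow> int)" where
  "rsub f h = (\<lambda>g. f g - h g)"

definition rzero :: "word \<Rightarrow> int" where
  "rzero = (\<lambda>g. 0)"

definition rmul :: "(word \<Rightarrow> int) \<Rightarrow> (word \<Rightarrow> int) \<Rightarrow> (word \<Rightarrow> int)" where
  "rmul f h = (\<lambda>g. \<Sum>(u, v) \<in> supp f \<times> supp h. if gmul u v = g then f u * h v else 0)"

definition rsum :: "nat \<Rightarrow> (nat \<Rightarrow> word \<Rightarrow> int) \<Rightarrow> (word \<Rightarrow> int)" where
  "rsum n F = (\<lambda>g. \<Sum>i<n. F i g)"

definition gel :: "word \<Rightarrow> (word \<Rightarrow> int)" where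
  "gel w = (\<lambda>g. if g = w then 1 else 0)"

definition rone :: "word \<Rightarrow> int" where
  "rone = gel []"

definition gen :: "nat \<Rightarrow> word" where
  "gen i = [(i, False)]"

definition aug :: "(word \<Rightarrow> int) \<Rightarrow> int" where
  "aug f = (\<Sum>g \<in> supp f. f g)"

definition Delta :: "nat \<Rightarrow> (word \<Rightarrow> int) set" where
  "Delta n = {f \<in> ZF n. aug f = 0}"

text \<open>Fox derivatives: the unique family d_0..d_(n-1) in Z F_n with
  g - 1 = sum_i d_i(g) (x_i - 1).  (Indices >= n are set to 0 for uniqueness.)\<close>
definition fox :: "nat \<Rightarrow> word \<Rightarrow> nat \<Rightarrow> (word \<Rightarrow> int)" where
  "fox n g = (THE d. (\<forall>i<n. d i \<in> ZF n) \<and> (\<forall>i\<ge>n. d i = rzero) \<and>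
      rsub (gel g) rone = rsum n (\<lambda>i. rmul (d i) (rsub (gel (gen i)) rone)))"

definition right_ideal_gen :: "nat \<Rightarrow> (nat \<Rightarrow> word \<Rightarrow> int) \<Rightarrow> (word \<Rightarrow> int) set" where
  "right_ideal_gen n a = {rsum n (\<lambda>i. rmul (a i) (r i)) | r. \<forall>i<n. r i \<in> ZF n}"

definition Delta_primitive :: "nat \<Rightarrow> word \<Rightarrow> bool" where
  "Delta_primitive n u \<longleftrightarrow> u \<in> FG n \<and> right_ideal_gen n (fox n u) = Delta n"

end

theory Submission imports Defs "Jordan_Normal_Form.Determinant" begin

fun red :: "word \<Rightarrow> bool" where
  "red [] = True"
| "red [x] = True"
| "red (x # y # ys) = (\<not> (fst x = fst y \<and> snd x \<noteq> snd y) \<and> red (y # ys))"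

lemma red_fred: "red (fred w)"
proof (induction w)
  case Nil then show ?case by simp
next
  case (Cons x xs)
  then show ?case
    by (cases "fred xs"; cases "tl (fred xs)") (auto split: list.splits)
qed

lemma fred_red: "red w \<Longrightarrow> fred w = w"
  by (induction w rule: red.induct) auto

lemma fred_id_iff: "fred w = w \<longleftrightarrow> red w"
  using red_fred fred_red by metis

lemma fred_fred: "fred (fred w) = fred w"
  using red_fred fred_red by metis

lemma red_appendD: "red (xs @ ys) \<Longrightarrow> red xs"
proof (induction xs)
  case Nil then show ?case by simp
next
  case (Cons x xs) then show ?case by (cases xs) auto
qed

lemma fred_snoc: "red w \<Longrightarrow> fred (w @ [l]) =
  (if w \<noteq> [] \<and> fst (last w) = fst l \<and> snd (last w) \<noteq> snd l then butlast w else w @ [l])"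
proof (induction w rule: red.induct)
  case 1 then show ?case by simp
next
  case (2 x) then show ?case by simp
next
  case (3 x y ys)
  then show ?case by (cases ys) (auto split: if_splits)
qed

definition sg :: "letter \<Rightarrow> int" where "sg l = (if snd l then -1 else 1)"

definition ex :: "nat \<Rightarrow> word \<Rightarrow> int" where
  "ex k w = sum_list (map (\<lambda>l. if fst l = k then sg l else 0) w)"

fun cq :: "nat \<Rightarrow> nat \<Rightarrow> word \<Rightarrow> int" where
  "cq k m [] = 0"
| "cq k m (x # w) = cq k m w + (if fst x = k then sg x * ex m w else 0)
     + (if x = (k, True) \<and> m = k then 1 else 0)"

lemma ex_Nil[simp]: "ex k [] = 0" by (simp add: ex_def)
lemma ex_Cons[simp]: "ex k (x # w) = (if fst x = k then sg x else 0) + ex k w" by (simp add: ex_def)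
lemma ex_append[simp]: "ex k (v @ w) = ex k v + ex k w" by (simp add: ex_def)

lemma ex_fred: "ex k (fred w) = ex k w"
proof (induction w)
  case Nil then show ?case by simp
next
  case (Cons x xs)
  then show ?case by (cases "fred xs") (auto simp: sg_def split: if_splits)
qed

lemma cq_fred: "cq k m (fred w) = cq k m w"
proof (induction w)
  case Nil then show ?case by simp
next
  case (Cons x xs)
  show ?case
  proof (cases "fred xs")
    case Nil then show ?thesis using Cons ex_fred[of m xs] by simp
  next
    case (Cons y ys)
    have e: "ex m xs = ex m (y # ys)" "cq k m xs = cq k m (y#ys)" using Cons ex_fred[of m xs] \<open>cq k m (fred xs) = cq k m xs\<close> by auto
    show ?thesis using Cons e
      by (cases x; cases y) (auto simp: sg_def)
  qed
qed

lemma cq_snoc: "cq k m (w @ [l]) = cq k m w + ex k w * sg l * (if fst l = m then 1 else 0)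
   + (if l = (k, True) \<and> m = k then 1 else 0)"
  by (induction w) (auto simp: algebra_simps)

lemma cq_sym: "cq k m w + cq m k w = ex k w * ex m w - (if k = m then ex k w else 0)"
  by (induction w) (auto simp: algebra_simps sg_def)


definition Phi :: "(word \<Rightarrow> int) \<Rightarrow> (word \<Rightarrow> int) \<Rightarrow> int" where
  "Phi \<phi> f = (\<Sum>g\<in>supp f. f g * \<phi> g)"

lemma Phi_superset: "finite S \<Longrightarrow> supp f \<subseteq> S \<Longrightarrow> Phi \<phi> f = (\<Sum>g\<in>S. f g * \<phi> g)"
  unfolding Phi_def by (rule sum.mono_neutral_left) (auto simp: supp_def)

lemma Phi_cong: "(\<And>g. g \<in> supp f \<Longrightarrow> \<phi> g = \<psi> g) \<Longrightarrow> Phi \<phi> f = Phi \<psi> f"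
  unfolding Phi_def by (rule sum.cong) auto

lemma supp_radd: "supp (radd f h) \<subseteq> supp f \<union> supp h" by (auto simp: supp_def radd_def)
lemma supp_rsub: "supp (rsub f h) \<subseteq> supp f \<union> supp h" by (auto simp: supp_def rsub_def)
lemma supp_gel[simp]: "supp (gel w) = {w}" by (auto simp: supp_def gel_def)
lemma supp_rzero[simp]: "supp rzero = {}" by (auto simp: supp_def rzero_def)
lemma supp_rsum: "supp (rsum n F) \<subseteq> (\<Union>i<n. supp (F i))"
  by (auto simp: supp_def rsum_def intro: ccontr)
lemma supp_rmul: "supp (rmul a b) \<subseteq> (\<lambda>(u,v). gmul u v) ` (supp a \<times> supp b)"
proof
  fix g assume "g \<in> supp (rmul a b)"
  then have "(\<Sum>(u, v) \<in> supp a \<times> supp b. if gmul u v = g then a u * b v else 0) \<noteq> 0"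
    by (simp add: supp_def rmul_def)
  then obtain p where "p \<in> supp a \<times> supp b" "(case p of (u,v) \<Rightarrow> if gmul u v = g then a u * b v else 0) \<noteq> 0"
    by (meson sum.neutral)
  then show "g \<in> (\<lambda>(u,v). gmul u v) ` (supp a \<times> supp b)"
    by (cases p) (auto split: if_splits)
qed

lemma fin_radd: "finite (supp f) \<Longrightarrow> finite (supp h) \<Longrightarrow> finite (supp (radd f h))"
  using supp_radd by (meson finite_UnI finite_subset)
lemma fin_rsub: "finite (supp f) \<Longrightarrow> finite (supp h) \<Longrightarrow> finite (supp (rsub f h))"
  using supp_rsub by (meson finite_UnI finite_subset)
lemma fin_rmul: "finite (supp f) \<Longrightarrow> finite (supp h) \<Longrightarrow> finite (supp (rmul f h))"
  by (rule finite_subset[OF supp_rmul]) auto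
lemma fin_rsum: "(\<And>i. i < n \<Longrightarrow> finite (supp (F i))) \<Longrightarrow> finite (supp (rsum n F))"
  using supp_rsum[of n F] by (meson finite_UN_I finite_lessThan finite_subset lessThan_iff)

lemma Phi_radd: "finite (supp f) \<Longrightarrow> finite (supp h) \<Longrightarrow> Phi \<phi> (radd f h) = Phi \<phi> f + Phi \<phi> h"
  apply (subst (1 2 3) Phi_superset[of "supp f \<union> supp h"])
  using supp_radd by (auto simp: radd_def sum.distrib algebra_simps)

lemma Phi_rsub: "finite (supp f) \<Longrightarrow> finite (supp h) \<Longrightarrow> Phi \<phi> (rsub f h) = Phi \<phi> f - Phi \<phi> h"
  apply (subst (1 2 3) Phi_superset[of "supp f \<union> supp h"])
  using supp_rsub by (auto simp: rsub_def sum_subtractf algebra_simps)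

lemma Phi_gel[simp]: "Phi \<phi> (gel w) = \<phi> w" unfolding Phi_def supp_gel by (simp add: gel_def)
lemma Phi_rzero[simp]: "Phi \<phi> rzero = 0" by (simp add: Phi_def)

lemma Phi_rsum: assumes "\<And>i. i < n \<Longrightarrow> finite (supp (F i))"
  shows "Phi \<phi> (rsum n F) = (\<Sum>i<n. Phi \<phi> (F i))"
proof -
  let ?S = "\<Union>i<n. supp (F i)"
  have fS: "finite ?S" using assms by auto
  have "Phi \<phi> (rsum n F) = (\<Sum>g\<in>?S. rsum n F g * \<phi> g)"
    by (rule Phi_superset[OF fS supp_rsum])
  also have "\<dots> = (\<Sum>g\<in>?S. \<Sum>i<n. F i g * \<phi> g)" by (simp add: rsum_def sum_distrib_right)
  also have "\<dots> = (\<Sum>i<n. \<Sum>g\<in>?S. F i g * \<phi> g)" by (rule sum.swap)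
  also have "\<dots> = (\<Sum>i<n. Phi \<phi> (F i))"
    by (rule sum.cong[OF refl], rule Phi_superset[symmetric, OF fS]) auto
  finally show ?thesis .
qed

lemma Phi_rmul: assumes fa: "finite (supp a)" and fb: "finite (supp b)"
  shows "Phi \<phi> (rmul a b) = (\<Sum>(u,v)\<in>supp a \<times> supp b. a u * b v * \<phi> (gmul u v))"
proof -
  let ?P = "supp a \<times> supp b"
  let ?S = "(\<lambda>(u,v). gmul u v) ` ?P"
  have fS: "finite ?S" using fa fb by auto
  have "Phi \<phi> (rmul a b) = (\<Sum>g\<in>?S. rmul a b g * \<phi> g)"
    by (rule Phi_superset[OF fS supp_rmul])
  also have "\<dots> = (\<Sum>g\<in>?S. \<Sum>p\<in>?P. (if gmul (fst p) (snd p) = g then a (fst p) * b (snd p) * \<phi> g else 0))"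
    unfolding rmul_def sum_distrib_right case_prod_beta
    by (intro sum.cong refl) auto
  also have "\<dots> = (\<Sum>p\<in>?P. \<Sum>g\<in>?S. (if gmul (fst p) (snd p) = g then a (fst p) * b (snd p) * \<phi> g else 0))"
    by (rule sum.swap)
  also have "\<dots> = (\<Sum>p\<in>?P. a (fst p) * b (snd p) * \<phi> (gmul (fst p) (snd p)))"
  proof (rule sum.cong[OF refl])
    fix p assume p: "p \<in> ?P"
    have "gmul (fst p) (snd p) \<in> ?S" using p by force
    then show "(\<Sum>g\<in>?S. (if gmul (fst p) (snd p) = g then a (fst p) * b (snd p) * \<phi> g else 0))
        = a (fst p) * b (snd p) * \<phi> (gmul (fst p) (snd p))"
      using fS by (simp add: sum.delta)
  qed
  finally show ?thesis by (simp add: case_prod_beta)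
qed

lemma Phi_ind: "finite (supp f) \<Longrightarrow> Phi (\<lambda>g. if g = h then 1 else 0) f = f h"
  unfolding Phi_def by (auto simp: supp_def if_distrib sum.delta' cong: if_cong)

lemma supp_X: "supp (rsub (gel (gen i)) rone) = {[(i,False)], []}"
  by (auto simp: supp_def rsub_def gel_def rone_def gen_def)

lemma Phi_rmul_X: assumes fa: "finite (supp a)" and ra: "\<And>u. u \<in> supp a \<Longrightarrow> red u"
  shows "Phi \<phi> (rmul a (rsub (gel (gen i)) rone)) = Phi (\<lambda>u. \<phi> (fred (u @ [(i,False)])) - \<phi> u) a"
proof -
  have fb: "finite (supp (rsub (gel (gen i)) rone))" by (simp add: supp_X)
  have "Phi \<phi> (rmul a (rsub (gel (gen i)) rone)) =
     (\<Sum>u\<in>supp a. \<Sum>v\<in>{[(i,False)], []}. a u * rsub (gel (gen i)) rone v * \<phi> (gmul u v))"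
    unfolding Phi_rmul[OF fa fb] supp_X by (rule sum.cartesian_product[symmetric])
  also have "\<dots> = (\<Sum>u\<in>supp a. a u * (\<phi> (fred (u @ [(i,False)])) - \<phi> u))"
    by (rule sum.cong[OF refl]) (auto simp: rsub_def gel_def rone_def gen_def gmul_def fred_red ra algebra_simps)
  finally show ?thesis by (simp add: Phi_def)
qed


definition fterm :: "nat \<Rightarrow> word \<Rightarrow> letter \<Rightarrow> (word \<Rightarrow> int)" where
  "fterm i w l = (if l = (i,False) then gel w else if l = (i,True) then rsub rzero (gel (w @ [l])) else rzero)"

fun drev :: "nat \<Rightarrow> word \<Rightarrow> (word \<Rightarrow> int)" where
  "drev i [] = rzero"
| "drev i (l # rw) = radd (drev i rw) (fterm i (rev rw) l)"

definition D :: "nat \<Rightarrow> word \<Rightarrow> (word \<Rightarrow> int)" where "D i w = drev i (rev w)"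

lemma D_Nil[simp]: "D i [] = rzero" by (simp add: D_def)
lemma D_snoc[simp]: "D i (w @ [l]) = radd (D i w) (fterm i w l)" by (simp add: D_def)

lemma supp_fterm: "supp (fterm i w l) \<subseteq> {w, w @ [l]}"
  by (auto simp: fterm_def supp_def rsub_def rzero_def gel_def)

lemma FG_snocD: "w @ [l] \<in> FG n \<Longrightarrow> w \<in> FG n \<and> fst l < n"
  by (auto simp: FG_def fred_id_iff dest: red_appendD)

lemma FG_red: "w \<in> FG n \<Longrightarrow> red w" by (simp add: FG_def fred_id_iff)

lemma D_ZF: "w \<in> FG n \<Longrightarrow> finite (supp (D i w)) \<and> supp (D i w) \<subseteq> FG n"
proof (induction w rule: rev_induct)
  case Nil then show ?case by simp
next
  case (snoc l w)
  then have w: "w \<in> FG n" using FG_snocD by blast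
  have ft: "finite (supp (fterm i w l))" "supp (fterm i w l) \<subseteq> FG n"
    using supp_fterm[of i w l] w snoc.prems by (auto intro: finite_subset)
  show ?case using snoc.IH[OF w] ft supp_radd[of "D i w" "fterm i w l"]
    by (auto intro: fin_radd)
qed

definition psi :: "(word \<Rightarrow> int) \<Rightarrow> nat \<Rightarrow> word \<Rightarrow> int" where
  "psi \<phi> i u = \<phi> (fred (u @ [(i,False)])) - \<phi> u"

lemma Phi_fterm: assumes "w @ [l] \<in> FG n"
  shows "Phi (psi \<phi> i) (fterm i w l) = (if i = fst l then \<phi> (w @ [l]) - \<phi> w else 0)"
proof -
  obtain a b where l: "l = (a,b)" by fastforce
  have r: "red (w @ [(a,b)])" using assms FG_red l by blast
  then have r0: "fred (w @ [(a,b)]) = w @ [(a,b)]" by (simp add: fred_red)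
  have r1: "fred (w @ [(a,b), (a, False)]) = w" if "b"
    using fred_snoc[OF r, of "(a, False)"] that by simp
  show ?thesis
    using r0 r1 by (cases b) (auto simp: l fterm_def psi_def Phi_rsub)
qed

lemma D_exist: "w \<in> FG n \<Longrightarrow> (\<Sum>i<n. Phi (psi \<phi> i) (D i w)) = \<phi> w - \<phi> []"
proof (induction w rule: rev_induct)
  case Nil then show ?case by simp
next
  case (snoc l w)
  then have w: "w \<in> FG n" and ln: "fst l < n" using FG_snocD by blast+
  have "(\<Sum>i<n. Phi (psi \<phi> i) (D i (w @ [l]))) =
      (\<Sum>i<n. Phi (psi \<phi> i) (D i w)) + (\<Sum>i<n. Phi (psi \<phi> i) (fterm i w l))"
  proof -
    have f1: "finite (supp (D i w))" for i using D_ZF[OF w] by blast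
    have f2: "finite (supp (fterm i w l))" for i using supp_fterm[of i w l] by (rule finite_subset) simp
    show ?thesis by (simp add: Phi_radd[OF f1 f2] sum.distrib)
  qed
  also have "(\<Sum>i<n. Phi (psi \<phi> i) (fterm i w l)) = \<phi> (w @ [l]) - \<phi> w"
    using ln by (simp add: Phi_fterm[OF snoc.prems] sum.delta)
  finally show ?case using snoc.IH[OF w] by simp
qed

abbreviation X :: "nat \<Rightarrow> word \<Rightarrow> int" where "X i \<equiv> rsub (gel (gen i)) rone"

lemma Phi_KEY: assumes "\<forall>i<n. d i \<in> ZF n"
  shows "Phi \<phi> (rsum n (\<lambda>i. rmul (d i) (X i))) = (\<Sum>i<n. Phi (psi \<phi> i) (d i))"
proof -
  have fd: "finite (supp (d i))" "\<And>u. u \<in> supp (d i) \<Longrightarrow> red u" if "i < n" for i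
    using assms that by (auto simp: ZF_def FG_def fred_id_iff)
  have fX: "finite (supp (X i))" for i by (simp add: supp_X)
  have pe: "psi \<phi> i = (\<lambda>u. \<phi> (fred (u @ [(i,False)])) - \<phi> u)" for i
    by (rule ext) (simp add: psi_def)
  show ?thesis
    by (simp add: Phi_rsum fin_rmul fd fX Phi_rmul_X pe)
qed

lemma fun_eq_Phi: "finite (supp f) \<Longrightarrow> finite (supp g) \<Longrightarrow>
   (\<And>h. Phi (\<lambda>x. if x = h then 1 else 0) f = Phi (\<lambda>x. if x = h then 1 else 0) g) \<Longrightarrow> f = g"
  using Phi_ind by (metis ext)

lemma D_step: "red v \<Longrightarrow> D j (fred (v @ [(i,False)])) h - D j v h = (if i = j \<and> v = h then 1 else 0)"
proof (cases "v \<noteq> [] \<and> fst (last v) = i \<and> snd (last v) \<noteq> False")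
  case True
  assume r: "red v"
  obtain w where v: "v = w @ [(i,True)]" using True
    by (metis append_butlast_last_id prod.collapse)
  show ?thesis using fred_snoc[OF r, of "(i,False)"] True v
    by (auto simp: fterm_def radd_def rsub_def rzero_def gel_def)
next
  case False
  assume r: "red v"
  show ?thesis using fred_snoc[OF r, of "(i,False)"] False
    by (auto simp: fterm_def radd_def rsub_def rzero_def gel_def)
qed

definition foxP :: "nat \<Rightarrow> word \<Rightarrow> (nat \<Rightarrow> word \<Rightarrow> int) \<Rightarrow> bool" where
  "foxP n u d \<longleftrightarrow> (\<forall>i<n. d i \<in> ZF n) \<and> (\<forall>i\<ge>n. d i = rzero) \<and>
      rsub (gel u) rone = rsum n (\<lambda>i. rmul (d i) (rsub (gel (gen i)) rone))"

lemma fin_X_sum: "\<forall>i<n. d i \<in> ZF n \<Longrightarrow> finite (supp (rsum n (\<lambda>i. rmul (d i) (X i))))"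
  by (intro fin_rsum fin_rmul) (auto simp: ZF_def supp_X)

lemma fox_unique: assumes "foxP n u d" "foxP n u d'" shows "d = d'"
proof (rule ext, rule ext)
  fix j h
  show "d j h = d' j h"
  proof (cases "j < n")
    case False then show ?thesis using assms by (simp add: foxP_def)
  next
    case True
    have key: "Phi (\<lambda>g. D j g h) (rsum n (\<lambda>i. rmul (e i) (X i))) = e j h" if e: "\<forall>i<n. e i \<in> ZF n" for e
    proof -
      have "Phi (psi (\<lambda>g. D j g h) i) (e i) = (if i = j then e i h else 0)" if i: "i < n" for i
      proof -
        have "Phi (psi (\<lambda>g. D j g h) i) (e i) = Phi (\<lambda>g. if i = j then (if g = h then 1 else 0) else 0) (e i)"
        proof (rule Phi_cong)
          fix g assume g: "g \<in> supp (e i)"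
          then have "red g" using e i by (auto simp: ZF_def FG_def fred_id_iff)
          from D_step[OF this, of j i h] show "psi (\<lambda>g. D j g h) i g = (if i = j then (if g = h then 1 else 0) else 0)"
            by (auto simp: psi_def)
        qed
        also have "\<dots> = (if i = j then e i h else 0)"
          using e i Phi_ind[of "e i" h] by (auto simp: ZF_def Phi_def)
        finally show ?thesis .
      qed
      then show ?thesis using Phi_KEY[OF e] True by (simp add: sum.delta)
    qed
    have "d j h = Phi (\<lambda>g. D j g h) (rsum n (\<lambda>i. rmul (d i) (X i)))"
      using key assms(1) by (simp add: foxP_def)
    also have "\<dots> = Phi (\<lambda>g. D j g h) (rsum n (\<lambda>i. rmul (d' i) (X i)))"
      using assms by (simp add: foxP_def)
    also have "\<dots> = d' j h" using key assms(2) by (simp add: foxP_def)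
    finally show ?thesis .
  qed
qed

lemma fox_exists: assumes u: "u \<in> FG n" shows "foxP n u (\<lambda>i. if i < n then D i u else rzero)"
proof -
  let ?d = "\<lambda>i. if i < n then D i u else rzero"
  have dZ: "\<forall>i<n. ?d i \<in> ZF n" using D_ZF[OF u] by (simp add: ZF_def)
  have "rsub (gel u) rone = rsum n (\<lambda>i. rmul (?d i) (X i))"
  proof (rule fun_eq_Phi)
    show "finite (supp (rsub (gel u) rone))" by (simp add: fin_rsub rone_def)
    show "finite (supp (rsum n (\<lambda>i. rmul (?d i) (X i))))" using fin_X_sum[OF dZ] .
    fix h
    show "Phi (\<lambda>x. if x = h then 1 else 0) (rsub (gel u) rone) =
          Phi (\<lambda>x. if x = h then 1 else 0) (rsum n (\<lambda>i. rmul (?d i) (X i)))"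
      unfolding Phi_KEY[OF dZ] using D_exist[OF u, of "\<lambda>x. if x = h then 1 else 0"]
      by (simp add: Phi_rsub rone_def)
  qed
  then show ?thesis using dZ by (simp add: foxP_def)
qed

lemma fox_prop: "u \<in> FG n \<Longrightarrow> foxP n u (fox n u)"
proof -
  assume u: "u \<in> FG n"
  have "\<exists>!d. foxP n u d" using fox_exists[OF u] fox_unique by blast
  then have "foxP n u (THE d. foxP n u d)" by (rule theI')
  moreover have "fox n u = (THE d. foxP n u d)" by (simp add: fox_def foxP_def)
  ultimately show ?thesis by simp
qed

lemma no_antisym_inv:
  fixes A E :: "nat \<Rightarrow> nat \<Rightarrow> int"
  assumes n: "odd n"
    and anti: "\<forall>i<n. \<forall>k<n. A i k + A k i = 0"
    and inv: "\<forall>j<n. \<forall>k<n. (\<Sum>i<n. E j i * A i k) = (if j = k then 1 else 0)"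
  shows False
proof -
  define MA where "MA = mat n n (\<lambda>(i,k). A i k)"
  define ME where "ME = mat n n (\<lambda>(i,k). E i k)"
  have MA: "MA \<in> carrier_mat n n" and ME: "ME \<in> carrier_mat n n" by (auto simp: MA_def ME_def)
  have "ME * MA = 1\<^sub>m n"
  proof (rule eq_matI)
    fix j k assume "j < dim_row (1\<^sub>m n)" "k < dim_col (1\<^sub>m n)"
    then have jk: "j < n" "k < n" by auto
    have "(ME * MA) $$ (j,k) = (\<Sum>i<n. E j i * A i k)"
      using jk by (simp add: MA_def ME_def scalar_prod_def atLeast0LessThan)
    then show "(ME * MA) $$ (j,k) = 1\<^sub>m n $$ (j,k)" using inv jk by simp
  qed (auto simp: MA_def ME_def)
  then have "det ME * det MA = 1" using det_mult[OF ME MA] by simp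
  then have nz: "det MA \<noteq> 0" by auto
  have "transpose_mat MA = (-1) \<cdot>\<^sub>m MA"
  proof (rule eq_matI)
    fix j k assume "j < dim_row ((-1) \<cdot>\<^sub>m MA)" "k < dim_col ((-1) \<cdot>\<^sub>m MA)"
    then have jk: "j < n" "k < n" by (auto simp: MA_def)
    show "transpose_mat MA $$ (j,k) = ((-1) \<cdot>\<^sub>m MA) $$ (j,k)"
      using jk anti by (auto simp: MA_def) (metis add.commute add_eq_0_iff)
  qed (auto simp: MA_def)
  then have "det MA = (-1)^n * det MA"
    using det_transpose[OF MA] MA by simp
  then have "det MA = - det MA" using n by simp
  then show False using nz by simp
qed

lemma aug_Phi: "aug f = Phi (\<lambda>_. 1) f" by (simp add: aug_def Phi_def)

lemma sum_prod_split: fixes f g :: "'a \<Rightarrow> int" shows "finite A \<Longrightarrow> finite B \<Longrightarrow>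
  (\<Sum>(u,v)\<in>A \<times> B. f u * g v) = (\<Sum>u\<in>A. f u) * (\<Sum>v\<in>B. g v)"
proof -
  have "(\<Sum>(u,v)\<in>A \<times> B. f u * g v) = (\<Sum>u\<in>A. \<Sum>v\<in>B. f u * g v)"
    by (rule sum.cartesian_product[symmetric])
  also have "\<dots> = (\<Sum>u\<in>A. f u) * (\<Sum>v\<in>B. g v)" by (rule sum_product[symmetric])
  finally show ?thesis .
qed

lemma Phi_rmul_ex: assumes fa: "finite (supp a)" and fb: "finite (supp b)"
  shows "Phi (ex k) (rmul a b) = Phi (ex k) a * Phi (\<lambda>_. 1) b + Phi (\<lambda>_. 1) a * Phi (ex k) b"
proof -
  have "Phi (ex k) (rmul a b) = (\<Sum>(u,v)\<in>supp a \<times> supp b. a u * b v * (ex k u + ex k v))"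
    by (simp add: Phi_rmul[OF fa fb] gmul_def ex_fred)
  also have "\<dots> = (\<Sum>(u,v)\<in>supp a \<times> supp b. (a u * ex k u) * b v) + (\<Sum>(u,v)\<in>supp a \<times> supp b. a u * (b v * ex k v))"
    by (simp add: sum.distrib[symmetric] case_prod_beta algebra_simps)
  also have "\<dots> = Phi (ex k) a * Phi (\<lambda>_. 1) b + Phi (\<lambda>_. 1) a * Phi (ex k) b"
    by (simp add: sum_prod_split[OF fa fb] Phi_def)
  finally show ?thesis .
qed

lemma rmul_rone: "finite (supp f) \<Longrightarrow> (\<And>u. u \<in> supp f \<Longrightarrow> red u) \<Longrightarrow> rmul f rone = f"
proof (rule fun_eq_Phi)
  assume ff: "finite (supp f)" and r: "\<And>u. u \<in> supp f \<Longrightarrow> red u"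
  show "finite (supp (rmul f rone))" using ff by (simp add: fin_rmul rone_def)
  show "finite (supp f)" by fact
  fix h
  show "Phi (\<lambda>x. if x = h then 1 else 0) (rmul f rone) = Phi (\<lambda>x. if x = h then 1 else 0) f"
  proof -
    have s1: "supp rone = {[]}" "finite (supp rone)" by (simp_all add: rone_def)
    show ?thesis unfolding Phi_rmul[OF ff s1(2)] s1(1) sum.cartesian_product[symmetric]
      unfolding Phi_def
      by (rule sum.cong[OF refl]) (simp add: rone_def gel_def gmul_def fred_red r)
  qed
qed

lemma rmul_rzero: "rmul f rzero = rzero"
  by (simp add: rmul_def rzero_def supp_def)

lemma rmul_rzero': "rmul f (\<lambda>g. 0) = (\<lambda>g. 0)"
  using rmul_rzero by (simp add: rzero_def)

lemma psi_ex: "psi (ex k) i = (\<lambda>v. if i = k then 1 else 0)"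
  by (rule ext) (simp add: psi_def ex_fred sg_def)

lemma psi_cq: "psi (cq k m) i = (\<lambda>v. if i = m then ex k v else 0)"
  by (rule ext) (simp add: psi_def cq_fred cq_snoc sg_def)

lemma Phi_const0: "Phi (\<lambda>_. 0) f = 0" by (simp add: Phi_def)

lemma ZF_red: "f \<in> ZF n \<Longrightarrow> u \<in> supp f \<Longrightarrow> red u"
  by (auto simp: ZF_def FG_def fred_id_iff)

theorem corollary1p5:
  fixes n :: nat
  assumes "odd n" and "n \<ge> 3"
  shows "\<not> (\<exists>u \<in> FG n. Delta_primitive n u)"
proof
  assume "\<exists>u \<in> FG n. Delta_primitive n u"
  then obtain u where u: "u \<in> FG n" and prim: "right_ideal_gen n (fox n u) = Delta n"
    by (auto simp: Delta_primitive_def)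
  define d where "d = fox n u"
  have fp: "foxP n u d" using fox_prop[OF u] by (simp add: d_def)
  then have dZ: "\<forall>i<n. d i \<in> ZF n" and deq: "rsub (gel u) rone = rsum n (\<lambda>i. rmul (d i) (X i))"
    by (auto simp: foxP_def)
  have fd: "finite (supp (d i))" if "i < n" for i using dZ that by (simp add: ZF_def)
  have rd: "\<And>v. v \<in> supp (d i) \<Longrightarrow> red v" if "i < n" for i using dZ that ZF_red by blast
  have aug0: "Phi (\<lambda>_. 1) (d i) = 0" if i: "i < n" for i
  proof -
    let ?r = "\<lambda>k. if k = i then rone else rzero"
    have "\<forall>k<n. ?r k \<in> ZF n" by (auto simp: ZF_def rone_def FG_def)
    then have "rsum n (\<lambda>k. rmul (d k) (?r k)) \<in> right_ideal_gen n d"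
      by (simp only: right_ideal_gen_def mem_Collect_eq) (rule exI[of _ ?r], simp)
    moreover have "rsum n (\<lambda>k. rmul (d k) (?r k)) = d i"
    proof
      fix g
      have "rsum n (\<lambda>k. rmul (d k) (?r k)) g = (\<Sum>k<n. if k = i then d i g else 0)"
        unfolding rsum_def
        by (rule sum.cong[OF refl]) (auto simp: rmul_rone[OF fd rd] rmul_rzero rmul_rzero' rzero_def)
      then show "rsum n (\<lambda>k. rmul (d k) (?r k)) g = d i g" using i by simp
    qed
    ultimately have "d i \<in> Delta n" using prim by (simp add: d_def)
    then show ?thesis by (simp add: Delta_def aug_Phi)
  qed
  have "\<forall>j<n. \<exists>r. (\<forall>i<n. r i \<in> ZF n) \<and> X j = rsum n (\<lambda>i. rmul (d i) (r i))"
  proof (intro allI impI)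
    fix j assume j: "j < n"
    have "X j \<in> ZF n" using j by (simp add: ZF_def supp_X FG_def)
    moreover have "aug (X j) = 0" by (simp add: aug_Phi Phi_rsub rone_def)
    ultimately have "X j \<in> right_ideal_gen n d" using prim by (simp add: Delta_def d_def)
    then show "\<exists>r. (\<forall>i<n. r i \<in> ZF n) \<and> X j = rsum n (\<lambda>i. rmul (d i) (r i))"
      by (auto simp: right_ideal_gen_def)
  qed
  then obtain R where R: "\<And>j. j < n \<Longrightarrow> (\<forall>i<n. R j i \<in> ZF n) \<and> X j = rsum n (\<lambda>i. rmul (d i) (R j i))"
    by metis
  define A where "A i k = Phi (ex k) (d i)" for i k
  define E where "E j i = Phi (\<lambda>_. 1) (R j i)" for j i
  have inv: "\<forall>j<n. \<forall>k<n. (\<Sum>i<n. E j i * A i k) = (if j = k then 1 else 0)"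
  proof (intro allI impI)
    fix j k assume j: "j < n" and k: "k < n"
    have fR: "finite (supp (R j i))" if "i < n" for i using R[OF j] that by (simp add: ZF_def)
    have "(if j = k then 1 else 0) = Phi (ex k) (X j)"
      by (simp add: Phi_rsub rone_def gen_def sg_def)
    also have "\<dots> = Phi (ex k) (rsum n (\<lambda>i. rmul (d i) (R j i)))" using R[OF j] by simp
    also have "\<dots> = (\<Sum>i<n. Phi (ex k) (rmul (d i) (R j i)))"
      by (rule Phi_rsum) (simp add: fin_rmul fd fR)
    also have "\<dots> = (\<Sum>i<n. E j i * A i k)"
      by (rule sum.cong[OF refl]) (simp add: Phi_rmul_ex fd fR aug0 A_def E_def)
    finally show "(\<Sum>i<n. E j i * A i k) = (if j = k then 1 else 0)" by simp
  qed
  have exu: "ex k u = 0" if k: "k < n" for k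
  proof -
    have "ex k u = Phi (ex k) (rsub (gel u) rone)" by (simp add: Phi_rsub rone_def)
    also have "\<dots> = (\<Sum>i<n. Phi (psi (ex k) i) (d i))" unfolding deq by (rule Phi_KEY[OF dZ])
    also have "\<dots> = (\<Sum>i<n. if i = k then Phi (\<lambda>_. 1) (d i) else 0)"
      by (rule sum.cong[OF refl]) (simp add: psi_ex Phi_const0)
    also have "\<dots> = 0" using k aug0 by simp
    finally show ?thesis .
  qed
  have cqu: "cq k m u = A m k" if m: "m < n" for k m
  proof -
    have "cq k m u = Phi (cq k m) (rsub (gel u) rone)" by (simp add: Phi_rsub rone_def)
    also have "\<dots> = (\<Sum>i<n. Phi (psi (cq k m) i) (d i))" unfolding deq by (rule Phi_KEY[OF dZ])
    also have "\<dots> = (\<Sum>i<n. if i = m then A i k else 0)"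
      by (rule sum.cong[OF refl]) (simp add: psi_cq Phi_const0 A_def)
    also have "\<dots> = A m k" using m by simp
    finally show ?thesis .
  qed
  have anti: "\<forall>i<n. \<forall>k<n. A i k + A k i = 0"
    using cq_sym[of _ _ u] exu cqu by (metis add.commute diff_zero mult_zero_left)
  show False using no_antisym_inv[OF assms(1) anti inv] .
qed

end
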